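(* Consider the Markov chain $\mathcal{G}$ described in the context, with parameters $r\ge1$, $p_c,p_1,\ldots,p_r\in[0,1]$. Assume $p_c<1$ and $p_c\cdot r\cdot\max\{p_1,\ldots,p_r\}<1$. Then for every block $\alpha\in\{1,\ldots,r\}^*$, $$\mathbb{E}[O(s_1^\alpha)]=\frac{\sum_{i=1}^r p_i}{1-p_c\sum_{i=1}^r p_i}\qquad\text{and}\qquad \mathbb{E}[N(s_1^\alpha)]=\frac{r+\sum_{i=1}^r p_i}{1-p_c\sum_{i=1}^r p_i}.$$
   Context: Fix an integer $r\ge 1$ and probabilities $p_c,p_1,\ldots,p_r\in[0,1]$. Words $\alpha\in\{1,\ldots,r\}^*$ (finite sequences, $\varepsilon$ the empty word, $\alpha\cdot i$ concatenation, $r^k$ the word of $k$ letters $r$) are called blocks. The Markov chain $\mathcal{G}$ has the countable state space $\{s_i^\alpha, c_i^\alpha : 1\le i\le r,\ \alpha\in\{1,\ldots,r\}^*\}\cup\{\sharp,\bot\}$, initial state $\sharp$, and the following transition probabilities (all unlisted transitions have probability $0$): $p(\sharp,s_1^\varepsilon)=p_c$, $p(\sharp,\bot)=1-p_c$; $p(s_i^\alpha,c_i^\alpha)=p_i$ for $1\le i\le r$; $p(s_i^\alpha,s_{i+1}^\alpha)=1-p_i$ for $1\le i<r$; $p(c_i^\alpha,s_1^{\alpha\cdot i})=p_c$ for $1\le i\le r$; $p(c_i^\alpha,s_{i+1}^\alpha)=1-p_c$ for $1\le i<r$; for every word of the form $\gamma=\beta\cdot i\cdot r^k$ with $1\le i<r$,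 $k\ge 0$: $p(s_r^{\gamma},s_{i+1}^\beta)=1-p_r$ and $p(c_r^{\gamma},s_{i+1}^\beta)=1-p_c$; for every $\gamma\in r^*$ (including $\varepsilon$): $p(s_r^\gamma,\bot)=1-p_r$, $p(c_r^\gamma,\bot)=1-p_c$; and $p(\bot,\bot)=1$. The block of $s_i^\alpha$ and of $c_i^\alpha$ is $\alpha$. The output states are the states $c_i^\beta$ (and $\sharp$). For a block $\alpha$ let $E_\alpha=\{s_j^\beta : 1\le j\le r,\ \beta\text{ a proper prefix of }\alpha\}\cup\{\bot\}$. For a state $s$ with block $\alpha$ and the chain $(X_n)$ started at $X_0=s$: $N(s)=\inf\{n\ge0 : X_n\in E_\alpha\}$ is the number of states visited before $E_\alpha$ is first reached, and $O(s)$ is the number of indices $0\le n< N(s)$ such that $X_n$ is an output state (the number of output states visited from $s$ before the block of $s$ is left upward). *)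

theory Defs
  imports "HOL-Probability.Probability" "HOL-Library.Sublist"
begin

text \<open>States of the chain G.  S i a is s_i^a, C i a is c_i^a (blocks are
  lists over {1..r}, concatenation a.i is a @ [i]); Sharp is the initial
  state, Bot the absorbing state.\<close>
datatype state = Sharp | Bot | S nat "nat list" | C nat "nat list"

text \<open>Leaving block g upward from s_r^g or c_r^g: if g = b @ [i] @ r^k with
  i < r, go to s_(i+1)^b; if g consists only of letters r, go to Bot.\<close>
definition exit_state :: "nat \<Rightarrow> nat list \<Rightarrow> state" where
  "exit_state r g =
     (let g' = rev (dropWhile (\<lambda>x. x = r) (rev g))
      in if g' = [] then Bot else S (last g' + 1) (butlast g'))"

text \<open>Transition kernel of G (parameters r, p_c, p_1..p_r).  Transitions of
  states with an index outside {1..r} (not part of the state space) are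
  set to Bot; they are unreachable.\<close>
fun kern :: "nat \<Rightarrow> real \<Rightarrow> (nat \<Rightarrow> real) \<Rightarrow> state \<Rightarrow> state pmf" where
  "kern r pc p Sharp = map_pmf (\<lambda>b. if b then S 1 [] else Bot) (bernoulli_pmf pc)"
| "kern r pc p Bot = return_pmf Bot"
| "kern r pc p (S i a) =
     (if 1 \<le> i \<and> i \<le> r then
        map_pmf (\<lambda>b. if b then C i a
                     else if i < r then S (i + 1) a else exit_state r a)
                (bernoulli_pmf (p i))
      else return_pmf Bot)"
| "kern r pc p (C i a) =
     (if 1 \<le> i \<and> i \<le> r then
        map_pmf (\<lambda>b. if b then S 1 (a @ [i])
                     else if i < r then S (i + 1) a else exit_state r a)
                (bernoulli_pmf pc)
      else return_pmf Bot)"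

primrec path :: "(state \<Rightarrow> state pmf) \<Rightarrow> nat \<Rightarrow> state \<Rightarrow> state list pmf" where
  "path K 0 s = return_pmf [s]"
| "path K (Suc n) s = K s \<bind> (\<lambda>t. map_pmf (Cons s) (path K n t))"

fun block_of :: "state \<Rightarrow> nat list" where
  "block_of (S i a) = a"
| "block_of (C i a) = a"
| "block_of Sharp = []"
| "block_of Bot = []"

fun is_output :: "state \<Rightarrow> bool" where
  "is_output (C i a) = True"
| "is_output Sharp = True"
| "is_output _ = False"

definition exitset :: "nat \<Rightarrow> nat list \<Rightarrow> state set" where
  "exitset r a = {S j b | j b. 1 \<le> j \<and> j \<le> r \<and> strict_prefix b a} \<union> {Bot}"

text \<open>On the first n+1 states, the quantities
  below compute min(N, n+1) and the number of output states among X_k with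
  k < min(N, n+1); these increase to N and O, so by monotone convergence the
  supremum of their expectations is E[N(s)] resp. E[O(s)] (possibly infinite).\<close>
definition ExpN :: "nat \<Rightarrow> real \<Rightarrow> (nat \<Rightarrow> real) \<Rightarrow> state \<Rightarrow> ennreal" where
  "ExpN r pc p s = (SUP n. \<integral>\<^sup>+ xs. ennreal (real (length
        (takeWhile (\<lambda>x. x \<notin> exitset r (block_of s)) xs))) \<partial>measure_pmf (path (kern r pc p) n s))"

definition ExpO :: "nat \<Rightarrow> real \<Rightarrow> (nat \<Rightarrow> real) \<Rightarrow> state \<Rightarrow> ennreal" where
  "ExpO r pc p s = (SUP n. \<integral>\<^sup>+ xs. ennreal (real (length (filter is_output
        (takeWhile (\<lambda>x. x \<notin> exitset r (block_of s)) xs)))) \<partial>measure_pmf (path (kern r pc p) n s))"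

end

theory Submission
  imports Defs
begin

lemma exit_nil: "exit_state r [] = Bot" by (simp add: exit_state_def)
lemma exit_r: "exit_state r (g @ [r]) = exit_state r g" by (simp add: exit_state_def)
lemma exit_j: "j \<noteq> r \<Longrightarrow> exit_state r (g @ [j]) = S (j+1) g" by (simp add: exit_state_def)

lemma exit_in: "set g \<subseteq> {1..r} \<Longrightarrow> exit_state r g \<in> exitset r g"
proof (induction g rule: rev_induct)
  case Nil
  then show ?case by (simp add: exit_nil exitset_def)
next
  case (snoc x g)
  show ?case
  proof (cases "x = r")
    case True
    have "exit_state r g \<in> exitset r g" using snoc by auto
    moreover have "exitset r g \<subseteq> exitset r (g @ [x])"
      unfolding exitset_def
      using prefix_order.less_le_trans[of _ g "g @ [x]"] by auto
    ultimately show ?thesis using True exit_r by auto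
  next
    case False
    then have "1 \<le> x + 1" "x + 1 \<le> r" using snoc.prems by auto
    moreover have "strict_prefix g (g @ [x])" unfolding strict_prefix_def by simp
    ultimately show ?thesis using False exit_j[OF False] unfolding exitset_def by blast
  qed
qed

locale G =
  fixes r :: nat and pc :: real and p :: "nat \<Rightarrow> real" and a :: "nat list"
  assumes r1: "r \<ge> 1" and pc0: "0 \<le> pc" and pc1: "pc < 1"
    and p01: "\<And>i. 1 \<le> i \<Longrightarrow> i \<le> r \<Longrightarrow> 0 \<le> p i \<and> p i \<le> 1"
    and cond: "pc * real r * Max (p ` {1..r}) < 1"
    and aset: "set a \<subseteq> {1..r}"
begin

fun q :: "state \<Rightarrow> real" where
  "q Sharp = pc" | "q Bot = 1"
| "q (S i g) = (if 1 \<le> i \<and> i \<le> r then p i else 1)"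
| "q (C i g) = (if 1 \<le> i \<and> i \<le> r then pc else 1)"

fun s1 :: "state \<Rightarrow> state" where
  "s1 Sharp = S 1 []" | "s1 Bot = Bot"
| "s1 (S i g) = (if 1 \<le> i \<and> i \<le> r then C i g else Bot)"
| "s1 (C i g) = (if 1 \<le> i \<and> i \<le> r then S 1 (g @ [i]) else Bot)"

fun s0 :: "state \<Rightarrow> state" where
  "s0 Sharp = Bot" | "s0 Bot = Bot"
| "s0 (S i g) = (if 1 \<le> i \<and> i \<le> r then (if i < r then S (i+1) g else exit_state r g) else Bot)"
| "s0 (C i g) = (if 1 \<le> i \<and> i \<le> r then (if i < r then S (i+1) g else exit_state r g) else Bot)"

lemma p0: "1 \<le> i \<Longrightarrow> i \<le> r \<Longrightarrow> 0 \<le> p i" using p01 by blast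
lemma p1: "1 \<le> i \<Longrightarrow> i \<le> r \<Longrightarrow> p i \<le> 1" using p01 by blast

lemma q01: "0 \<le> q s \<and> q s \<le> 1"
  by (cases s) (auto simp: p0 p1 pc0 pc1 less_imp_le)

lemma kern_int:
  "(\<integral>\<^sup>+t. f t \<partial>measure_pmf (kern r pc p s)) = ennreal (q s) * f (s1 s) + ennreal (1 - q s) * f (s0 s)"
proof (cases s)
  case Sharp
  then show ?thesis using pc0 pc1 by (simp add: mult.commute)
next
  case Bot
  then show ?thesis by simp
next
  case (S i g)
  then show ?thesis by (auto simp: mult.commute p0 p1)
next
  case (C i g)
  then show ?thesis using pc0 pc1 by (auto simp: mult.commute)
qed


definition E :: "state set" where "E = exitset r a"

definition M :: "(state \<Rightarrow> real) \<Rightarrow> state \<Rightarrow> real" where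
  "M g s = (if s \<in> E then 0 else q s * g (s1 s) + (1 - q s) * g (s0 s))"

fun fv :: "(state \<Rightarrow> real) \<Rightarrow> nat \<Rightarrow> state \<Rightarrow> real" where
  "fv w 0 s = (if s \<in> E then 0 else w s)"
| "fv w (Suc n) s = (if s \<in> E then 0 else w s) + M (fv w n) s"

lemma fv_nonneg: "(\<And>s. 0 \<le> w s) \<Longrightarrow> 0 \<le> fv w n s"
proof (induction n arbitrary: s)
  case 0 then show ?case by simp
next
  case (Suc n)
  have "0 \<le> M (fv w n) s" unfolding M_def using q01[of s] Suc by simp
  then show ?case using Suc by simp
qed

lemma nn_int_add_const:
  "(\<integral>\<^sup>+x. ennreal u + f x \<partial>measure_pmf N) = ennreal u + (\<integral>\<^sup>+x. f x \<partial>measure_pmf N)"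
proof -
  have "(\<integral>\<^sup>+x. ennreal u + f x \<partial>measure_pmf N) = (\<integral>\<^sup>+x. ennreal u \<partial>measure_pmf N) + (\<integral>\<^sup>+x. f x \<partial>measure_pmf N)"
    by (rule nn_integral_add) simp_all
  also have "(\<integral>\<^sup>+x. ennreal u \<partial>measure_pmf N) = ennreal u"
    by (simp add: measure_pmf.emeasure_space_1)
  finally show ?thesis .
qed

lemma path_int:
  fixes c :: "state list \<Rightarrow> real" and w :: "state \<Rightarrow> real"
  assumes cc: "\<And>s xs. c (s # xs) = (if s \<in> E then 0 else w s + c xs)" and c0: "c [] = 0"
    and wn: "\<And>s. 0 \<le> w s" and cn: "\<And>xs. 0 \<le> c xs"
  shows "(\<integral>\<^sup>+xs. ennreal (c xs) \<partial>measure_pmf (path (kern r pc p) n s))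
           = ennreal (fv w n s)"
proof (induction n arbitrary: s)
  case 0
  have "(\<integral>\<^sup>+xs. ennreal (c xs) \<partial>measure_pmf (path (kern r pc p) 0 s)) = ennreal (c [s])"
    by (simp only: path.simps nn_integral_return_pmf) simp
  also have "c [s] = fv w 0 s" by (simp only: cc c0 fv.simps) simp
  finally show ?case .
next
  case (Suc n)
  let ?f = "fv w n"
  have nn: "\<And>t. 0 \<le> ?f t" by (rule fv_nonneg) (rule wn)
  have step: "(\<integral>\<^sup>+xs. ennreal (c xs) \<partial>measure_pmf (path (kern r pc p) (Suc n) s))
        = (\<integral>\<^sup>+t. (\<integral>\<^sup>+xs. ennreal (c (s # xs)) \<partial>measure_pmf (path (kern r pc p) n t)) \<partial>measure_pmf (kern r pc p s))"
    by (simp only: path.simps nn_integral_bind_pmf nn_integral_map_pmf)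
  show ?case
  proof (cases "s \<in> E")
    case True
    have "\<And>xs. c (s # xs) = 0" using True cc by simp
    then have "(\<integral>\<^sup>+xs. ennreal (c xs) \<partial>measure_pmf (path (kern r pc p) (Suc n) s)) = 0"
      unfolding step by simp
    moreover have "fv w (Suc n) s = 0" using True by (simp add: M_def)
    ultimately show ?thesis by simp
  next
    case False
    have cs: "\<And>xs. ennreal (c (s # xs)) = ennreal (w s) + ennreal (c xs)"
    proof -
      fix xs
      have "c (s # xs) = w s + c xs" using False cc by simp
      then show "ennreal (c (s # xs)) = ennreal (w s) + ennreal (c xs)"
        using wn[of s] cn[of xs] by (simp add: ennreal_plus)
    qed
    have inner: "(\<integral>\<^sup>+xs. ennreal (c (s # xs)) \<partial>measure_pmf (path (kern r pc p) n t))
        = ennreal (w s) + ennreal (?f t)" for t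
      unfolding cs nn_int_add_const Suc.IH ..
    have "(\<integral>\<^sup>+xs. ennreal (c xs) \<partial>measure_pmf (path (kern r pc p) (Suc n) s))
        = ennreal (w s) + (\<integral>\<^sup>+t. ennreal (?f t) \<partial>measure_pmf (kern r pc p s))"
      unfolding step inner nn_int_add_const ..
    also have "\<dots> = ennreal (w s) + (ennreal (q s) * ennreal (?f (s1 s)) + ennreal (1 - q s) * ennreal (?f (s0 s)))"
      by (simp only: kern_int)
    also have "\<dots> = ennreal (w s + (q s * ?f (s1 s) + (1 - q s) * ?f (s0 s)))"
      using q01[of s] nn[of "s1 s"] nn[of "s0 s"] wn[of s]
      by (simp add: ennreal_plus ennreal_mult)
    also have "w s + (q s * ?f (s1 s) + (1 - q s) * ?f (s0 s)) = fv w (Suc n) s"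
      using False by (simp add: M_def)
    finally show ?thesis .
  qed
qed


definition PP :: real where "PP = (\<Sum>i=1..r. p i)"

lemma PP_nonneg: "0 \<le> PP"
  unfolding PP_def by (rule sum_nonneg) (simp add: p0)

lemma pcPP: "pc * PP < 1"
proof -
  have "PP \<le> real (card {1..r}) * Max (p ` {1..r})"
    unfolding PP_def by (rule sum_bounded_above) (simp add: Max_ge)
  then have "PP \<le> real r * Max (p ` {1..r})" by simp
  then have "pc * PP \<le> pc * (real r * Max (p ` {1..r}))" using pc0 by (rule mult_left_mono)
  then show ?thesis using cond by (simp add: mult.assoc)
qed

definition Phi :: "real \<Rightarrow> real" where "Phi ws = (ws * real r + PP) / (1 - pc * PP)"

definition R :: "real \<Rightarrow> nat \<Rightarrow> real" where
  "R ws j = (\<Sum>i=j..r. ws + p i * (1 + pc * Phi ws))"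

definition tsum :: "real \<Rightarrow> nat list \<Rightarrow> real" where
  "tsum ws g = sum_list (map (\<lambda>b. R ws (b+1)) (drop (length a) g))"

fun Vf :: "real \<Rightarrow> state \<Rightarrow> real" where
  "Vf ws (S i g) = (if prefix a g then R ws i + tsum ws g else 0)"
| "Vf ws (C i g) = (if prefix a g then 1 + pc * Phi ws + R ws (Suc i) + tsum ws g else 0)"
| "Vf ws Sharp = 0"
| "Vf ws Bot = 0"

lemma Phi_nonneg: "0 \<le> ws \<Longrightarrow> 0 \<le> Phi ws"
  unfolding Phi_def using pcPP PP_nonneg by simp

lemma Phi_mono: "ws \<le> ws' \<Longrightarrow> Phi ws \<le> Phi ws'"
proof -
  assume h: "ws \<le> ws'"
  have "ws * real r \<le> ws' * real r" using h by (simp add: mult_right_mono)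
  then show ?thesis unfolding Phi_def using pcPP by (intro divide_right_mono) auto
qed

lemma R1: "R ws 1 = Phi ws"
proof -
  have "R ws 1 = ws * real r + PP * (1 + pc * Phi ws)"
    unfolding R_def PP_def by (simp add: sum.distrib sum_distrib_right)
  moreover have "Phi ws * (1 - pc * PP) = ws * real r + PP"
    unfolding Phi_def using pcPP by simp
  ultimately show ?thesis by (simp add: algebra_simps)
qed

lemma R_step: "1 \<le> j \<Longrightarrow> j \<le> r \<Longrightarrow> R ws j = ws + p j * (1 + pc * Phi ws) + R ws (Suc j)"
  unfolding R_def by (simp add: sum.atLeast_Suc_atMost)

lemma R_end: "R ws (Suc r) = 0"
  unfolding R_def by simp

lemma R_nonneg: "0 \<le> ws \<Longrightarrow> 1 \<le> j \<Longrightarrow> 0 \<le> R ws j"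
  unfolding R_def using Phi_nonneg[of ws] pc0
  by (intro sum_nonneg) (simp add: p0)

lemma R_mono: "0 \<le> ws \<Longrightarrow> ws \<le> ws' \<Longrightarrow> 1 \<le> j \<Longrightarrow> R ws j \<le> R ws' j"
  unfolding R_def
proof (intro sum_mono)
  fix i assume "0 \<le> ws" "ws \<le> ws'" "1 \<le> j" "i \<in> {j..r}"
  then have "0 \<le> p i" using p0 by auto
  moreover have "pc * Phi ws \<le> pc * Phi ws'" using Phi_mono \<open>ws \<le> ws'\<close> pc0 by (simp add: mult_left_mono)
  ultimately have "p i * (1 + pc * Phi ws) \<le> p i * (1 + pc * Phi ws')" by (simp add: mult_left_mono)
  then show "ws + p i * (1 + pc * Phi ws) \<le> ws' + p i * (1 + pc * Phi ws')" using \<open>ws \<le> ws'\<close> by simp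
qed

lemma tsum_nonneg: "0 \<le> ws \<Longrightarrow> 0 \<le> tsum ws g"
  unfolding tsum_def by (intro sum_list_nonneg) (auto intro: R_nonneg)

lemma tsum_mono: "0 \<le> ws \<Longrightarrow> ws \<le> ws' \<Longrightarrow> tsum ws g \<le> tsum ws' g"
  unfolding tsum_def by (intro sum_list_mono) (auto intro: R_mono)

lemma tsum_a: "tsum ws a = 0" unfolding tsum_def by simp

lemma tsum_snoc: "prefix a g \<Longrightarrow> tsum ws (g @ [i]) = tsum ws g + R ws (Suc i)"
  unfolding tsum_def by (simp add: prefix_length_le)

definition Good :: "state \<Rightarrow> bool" where
  "Good s \<longleftrightarrow> s \<in> E \<or> (\<exists>i g. (s = S i g \<or> s = C i g) \<and> 1 \<le> i \<and> i \<le> r \<and> prefix a g \<and> set g \<subseteq> {1..r})"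

lemma spnp: "strict_prefix b g \<Longrightarrow> \<not> prefix g b"
  using prefix_order.less_le_not_le by blast

lemma E_Vf: "s \<in> E \<Longrightarrow> Vf ws s = 0"
  unfolding E_def exitset_def using spnp by auto

lemma notE: "prefix a g \<Longrightarrow> S i g \<notin> E \<and> C i g \<notin> E"
  unfolding E_def exitset_def using spnp by auto

lemma exit_V: "set b \<subseteq> {1..r} \<Longrightarrow> Good (exit_state r (a @ b)) \<and> Vf ws (exit_state r (a @ b)) = tsum ws (a @ b)"
proof (induction b rule: rev_induct)
  case Nil
  have "exit_state r a \<in> E" unfolding E_def using exit_in[OF aset] .
  then show ?case by (simp add: Good_def E_Vf tsum_a)
next
  case (snoc x b)
  then have ih: "Good (exit_state r (a @ b)) \<and> Vf ws (exit_state r (a @ b)) = tsum ws (a @ b)" by simp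
  have x: "1 \<le> x" "x \<le> r" using snoc.prems by auto
  show ?case
  proof (cases "x = r")
    case True
    then have "exit_state r (a @ b @ [x]) = exit_state r (a @ b)"
      using exit_r[of r "a @ b"] by simp
    moreover have "tsum ws (a @ b @ [x]) = tsum ws (a @ b)"
      using tsum_snoc[of "a @ b" ws x] True R_end by simp
    ultimately show ?thesis using ih by simp
  next
    case False
    then have ex: "exit_state r (a @ b @ [x]) = S (x+1) (a @ b)"
      using exit_j[of x r "a @ b"] by simp
    have g1: "1 \<le> x + 1" "x + 1 \<le> r" using x False by auto
    have g2: "set (a @ b) \<subseteq> {1..r}" using snoc.prems aset by simp
    have gd: "Good (S (x+1) (a @ b))" unfolding Good_def
      using g1 g2 by (intro disjI2 exI[of _ "x+1"] exI[of _ "a @ b"]) simp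
    have ts: "tsum ws (a @ b @ [x]) = tsum ws (a @ b) + R ws (Suc x)"
      using tsum_snoc[of "a @ b" ws x] by simp
    have vf: "Vf ws (S (x+1) (a @ b)) = R ws (Suc x) + tsum ws (a @ b)" by simp
    show ?thesis
    proof
      show "Good (exit_state r (a @ b @ [x]))" using gd by (subst ex)
      show "Vf ws (exit_state r (a @ b @ [x])) = tsum ws (a @ b @ [x])"
        unfolding ex vf ts by simp
    qed
  qed
qed


lemma goodSC: "Good s \<Longrightarrow> s \<notin> E \<Longrightarrow>
   \<exists>i g. (s = S i g \<or> s = C i g) \<and> 1 \<le> i \<and> i \<le> r \<and> prefix a g \<and> set g \<subseteq> {1..r}"
  by (simp add: Good_def)

lemma s0_val:
  assumes i: "1 \<le> i" "i \<le> r" and g: "prefix a g" "set g \<subseteq> {1..r}" and s: "s = S i g \<or> s = C i g"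
  shows "Good (s0 s) \<and> Vf ws (s0 s) = R ws (Suc i) + tsum ws g"
proof -
  have s0e: "s0 s = (if i < r then S (i+1) g else exit_state r g)" using s i by auto
  show ?thesis
  proof (cases "i < r")
    case True
    have "Good (S (i+1) g)" unfolding Good_def
      using True i g by (intro disjI2 exI[of _ "i+1"] exI[of _ g]) simp
    then show ?thesis using True s0e g by simp
  next
    case False
    obtain b where b: "g = a @ b" using g(1) prefixE by blast
    have "set b \<subseteq> {1..r}" using g(2) b by simp
    from exit_V[OF this, of ws] have "Good (exit_state r g) \<and> Vf ws (exit_state r g) = tsum ws g"
      using b by simp
    moreover have "i = r" using False i by simp
    ultimately show ?thesis using s0e R_end by simp
  qed
qed

lemma s1_val_S:
  assumes i: "1 \<le> i" "i \<le> r" and g: "prefix a g" "set g \<subseteq> {1..r}"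
  shows "Good (s1 (S i g)) \<and> Vf ws (s1 (S i g)) = 1 + pc * Phi ws + R ws (Suc i) + tsum ws g"
proof -
  have "Good (C i g)" unfolding Good_def
    using i g by (intro disjI2 exI[of _ i] exI[of _ g]) simp
  then show ?thesis using i g by simp
qed

lemma s1_val_C:
  assumes i: "1 \<le> i" "i \<le> r" and g: "prefix a g" "set g \<subseteq> {1..r}"
  shows "Good (s1 (C i g)) \<and> Vf ws (s1 (C i g)) = Phi ws + R ws (Suc i) + tsum ws g"
proof -
  have pg: "prefix a (g @ [i])" using g(1) by (auto simp: prefix_def)
  have "Good (S 1 (g @ [i]))" unfolding Good_def
    using i g pg r1 by (intro disjI2 exI[of _ 1] exI[of _ "g @ [i]"]) simp
  moreover have "Vf ws (S 1 (g @ [i])) = Phi ws + R ws (Suc i) + tsum ws g"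
    using pg tsum_snoc[OF g(1), of ws i] R1[of ws] by simp
  ultimately show ?thesis using i by simp
qed

definition wt :: "real \<Rightarrow> state \<Rightarrow> real" where
  "wt ws s = (case s of S i g \<Rightarrow> ws | _ \<Rightarrow> 1)"

lemma wt1: "wt 1 s = 1" unfolding wt_def by (cases s) auto

lemma bellman_closure:
  assumes "Good s" "s \<notin> E" "0 \<le> ws"
  shows "Vf ws s = wt ws s + q s * Vf ws (s1 s) + (1 - q s) * Vf ws (s0 s)
     \<and> Good (s1 s) \<and> Good (s0 s)
     \<and> Vf ws (s0 s) \<le> Vf ws (s1 s) \<and> Vf ws (s1 s) \<le> Vf ws (s0 s) + (1 + Phi ws)"
proof -
  obtain i g where ig: "s = S i g \<or> s = C i g" "1 \<le> i" "i \<le> r" "prefix a g" "set g \<subseteq> {1..r}"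
    using goodSC[OF assms(1,2)] by blast
  have v0: "Good (s0 s) \<and> Vf ws (s0 s) = R ws (Suc i) + tsum ws g"
    using s0_val[OF ig(2-5) ig(1)] .
  have Ph: "0 \<le> Phi ws" using Phi_nonneg assms(3) .
  have pc': "pc * Phi ws \<le> Phi ws" using Ph pc1 pc0 by (simp add: mult_left_le_one_le)
  show ?thesis
  proof (cases "s = S i g")
    case True
    have v1: "Good (s1 s) \<and> Vf ws (s1 s) = 1 + pc * Phi ws + R ws (Suc i) + tsum ws g"
      using s1_val_S[OF ig(2-5)] True by simp
    have vs: "Vf ws s = R ws i + tsum ws g" using True ig by simp
    have Rs: "R ws i = ws + p i * (1 + pc * Phi ws) + R ws (Suc i)" using R_step ig by simp
    have qs: "q s = p i" "wt ws s = ws" using True ig by (auto simp: wt_def)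
    have "Vf ws s = wt ws s + q s * Vf ws (s1 s) + (1 - q s) * Vf ws (s0 s)"
      unfolding vs qs using v0 v1 Rs by (simp add: algebra_simps)
    moreover have "Vf ws (s0 s) \<le> Vf ws (s1 s)" using v0 v1 Ph pc0 by simp
    moreover have "Vf ws (s1 s) \<le> Vf ws (s0 s) + (1 + Phi ws)" using v0 v1 pc' by simp
    ultimately show ?thesis using v0 v1 by simp
  next
    case False
    then have Cs: "s = C i g" using ig(1) by simp
    have v1: "Good (s1 s) \<and> Vf ws (s1 s) = Phi ws + R ws (Suc i) + tsum ws g"
      using s1_val_C[OF ig(2-5)] Cs by simp
    have vs: "Vf ws s = 1 + pc * Phi ws + R ws (Suc i) + tsum ws g" using Cs ig by simp
    have qs: "q s = pc" "wt ws s = 1" using Cs ig by (auto simp: wt_def)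
    have "Vf ws s = wt ws s + q s * Vf ws (s1 s) + (1 - q s) * Vf ws (s0 s)"
      unfolding vs qs using v0 v1 by (simp add: algebra_simps)
    moreover have "Vf ws (s0 s) \<le> Vf ws (s1 s)" using v0 v1 Ph by simp
    moreover have "Vf ws (s1 s) \<le> Vf ws (s0 s) + (1 + Phi ws)" using v0 v1 by simp
    ultimately show ?thesis using v0 v1 by simp
  qed
qed

lemma Vf_nonneg: "Good s \<Longrightarrow> 0 \<le> ws \<Longrightarrow> 0 \<le> Vf ws s"
proof -
  assume "Good s" "0 \<le> ws"
  show "0 \<le> Vf ws s"
  proof (cases "s \<in> E")
    case True then show ?thesis by (simp add: E_Vf)
  next
    case False
    then obtain i g where ig: "s = S i g \<or> s = C i g" "1 \<le> i" "i \<le> r" "prefix a g"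
      using goodSC[OF \<open>Good s\<close>] by blast
    have "0 \<le> R ws i" "0 \<le> R ws (Suc i)" "0 \<le> tsum ws g" "0 \<le> Phi ws"
      using R_nonneg tsum_nonneg Phi_nonneg \<open>0 \<le> ws\<close> ig by auto
    then show ?thesis using ig pc0 by auto
  qed
qed

lemma Vf_mono: "Good s \<Longrightarrow> 0 \<le> ws \<Longrightarrow> ws \<le> ws' \<Longrightarrow> Vf ws s \<le> Vf ws' s"
proof -
  assume "Good s" "0 \<le> ws" "ws \<le> ws'"
  show "Vf ws s \<le> Vf ws' s"
  proof (cases "s \<in> E")
    case True then show ?thesis by (simp add: E_Vf)
  next
    case False
    then obtain i g where ig: "s = S i g \<or> s = C i g" "1 \<le> i" "i \<le> r" "prefix a g"
      using goodSC[OF \<open>Good s\<close>] by blast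
    have "R ws i \<le> R ws' i" "R ws (Suc i) \<le> R ws' (Suc i)" "tsum ws g \<le> tsum ws' g"
      using R_mono tsum_mono \<open>0 \<le> ws\<close> \<open>ws \<le> ws'\<close> ig by auto
    moreover have "pc * Phi ws \<le> pc * Phi ws'"
      using Phi_mono[OF \<open>ws \<le> ws'\<close>] pc0 by (simp add: mult_left_mono)
    ultimately show ?thesis using ig by auto
  qed
qed

lemma M_mono: "Good s \<Longrightarrow> (\<And>t. Good t \<Longrightarrow> g t \<le> h t) \<Longrightarrow> M g s \<le> M h s"
proof -
  assume gs: "Good s" and gh: "\<And>t. Good t \<Longrightarrow> g t \<le> h t"
  show "M g s \<le> M h s"
  proof (cases "s \<in> E")
    case True then show ?thesis by (simp add: M_def)
  next
    case False
    have cl: "Good (s1 s)" "Good (s0 s)" using bellman_closure[OF gs False, of 0] by auto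
    have "q s * g (s1 s) \<le> q s * h (s1 s)" using q01[of s] gh[OF cl(1)] by (simp add: mult_left_mono)
    moreover have "(1 - q s) * g (s0 s) \<le> (1 - q s) * h (s0 s)" using q01[of s] gh[OF cl(2)] by (simp add: mult_left_mono)
    ultimately show ?thesis using False by (simp add: M_def)
  qed
qed

lemma M_nonneg: "Good s \<Longrightarrow> (\<And>t. Good t \<Longrightarrow> 0 \<le> g t) \<Longrightarrow> 0 \<le> M g s"
proof -
  assume gs: "Good s" and g0: "\<And>t. Good t \<Longrightarrow> 0 \<le> g t"
  show "0 \<le> M g s"
  proof (cases "s \<in> E")
    case True then show ?thesis by (simp add: M_def)
  next
    case False
    have cl: "Good (s1 s)" "Good (s0 s)" using bellman_closure[OF gs False, of 0] by auto
    have "0 \<le> q s * g (s1 s) + (1 - q s) * g (s0 s)"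
      using q01[of s] g0[OF cl(1)] g0[OF cl(2)] by (intro add_nonneg_nonneg mult_nonneg_nonneg) auto
    then show ?thesis using False by (simp add: M_def)
  qed
qed

lemma Mpow_mono: "Good s \<Longrightarrow> (\<And>t. Good t \<Longrightarrow> g t \<le> h t) \<Longrightarrow> (M ^^ k) g s \<le> (M ^^ k) h s"
proof (induction k arbitrary: s)
  case 0 then show ?case by simp
next
  case (Suc k) then show ?case by (simp add: M_mono)
qed

lemma Mpow_nonneg: "Good s \<Longrightarrow> (\<And>t. Good t \<Longrightarrow> 0 \<le> g t) \<Longrightarrow> 0 \<le> (M ^^ k) g s"
proof (induction k arbitrary: s)
  case 0 then show ?case by simp
next
  case (Suc k) then show ?case by (simp add: M_nonneg)
qed

lemma M_sum: "M (\<lambda>t. \<Sum>k\<in>A. g k t) s = (\<Sum>k\<in>A. M (g k) s)"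
  unfolding M_def by (simp add: sum_distrib_left sum.distrib)

lemma decomp:
  assumes ww: "\<And>s. Good s \<Longrightarrow> s \<notin> E \<Longrightarrow> w s = wt ws s" and ws: "0 \<le> ws"
  shows "Good s \<Longrightarrow> fv w n s + (M ^^ Suc n) (Vf ws) s = Vf ws s"
proof (induction n arbitrary: s)
  case 0
  show ?case
  proof (cases "s \<in> E")
    case True then show ?thesis by (simp add: M_def E_Vf)
  next
    case False
    then show ?thesis using bellman_closure[OF 0 False ws] ww[OF 0 False] by (simp add: M_def)
  qed
next
  case (Suc n)
  show ?case
  proof (cases "s \<in> E")
    case True then show ?thesis by (simp add: M_def E_Vf)
  next
    case False
    have bc: "Vf ws s = wt ws s + q s * Vf ws (s1 s) + (1 - q s) * Vf ws (s0 s)" "Good (s1 s)" "Good (s0 s)"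
      using bellman_closure[OF Suc.prems False ws] by auto
    have i1: "fv w n (s1 s) + (M ^^ Suc n) (Vf ws) (s1 s) = Vf ws (s1 s)" using Suc.IH bc(2) .
    have i0: "fv w n (s0 s) + (M ^^ Suc n) (Vf ws) (s0 s) = Vf ws (s0 s)" using Suc.IH bc(3) .
    have "fv w (Suc n) s + (M ^^ Suc (Suc n)) (Vf ws) s
        = w s + q s * (fv w n (s1 s) + (M ^^ Suc n) (Vf ws) (s1 s))
              + (1 - q s) * (fv w n (s0 s) + (M ^^ Suc n) (Vf ws) (s0 s))"
      using False by (simp add: M_def algebra_simps)
    also have "\<dots> = Vf ws s" unfolding i1 i0 bc(1) using ww[OF Suc.prems False] by simp
    finally show ?thesis .
  qed
qed

lemma ineq:
  fixes q u0 u1 J :: real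
  assumes "0 \<le> q" "q \<le> 1" "0 \<le> u0" "u0 \<le> u1" "u1 \<le> u0 + J"
  shows "(1 + q*u1 + (1-q)*u0) + (q*(u1^2 + J^2*u1) + (1-q)*(u0^2 + J^2*u0))
       \<le> (1 + q*u1 + (1-q)*u0)^2 + J^2*(1 + q*u1 + (1-q)*u0)"
proof -
  define m where "m = q*u1 + (1-q)*u0"
  have id: "q*u1^2 + (1-q)*u0^2 = m^2 + q*(1-q)*(u1-u0)^2"
    unfolding m_def by (simp add: power2_eq_square algebra_simps)
  have d: "(u1-u0)^2 \<le> J^2" using assms by (intro power_mono) auto
  have qq: "q*(1-q) \<le> 1" "0 \<le> q*(1-q)" using assms by (auto simp: mult_le_one)
  have "q*(1-q)*(u1-u0)^2 \<le> 1 * (u1-u0)^2" using qq by (intro mult_right_mono) auto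
  then have e: "q*(1-q)*(u1-u0)^2 \<le> J^2" using d by simp
  have m0: "0 \<le> m" unfolding m_def using assms by simp
  have L: "(1 + q*u1 + (1-q)*u0) + (q*(u1^2 + J^2*u1) + (1-q)*(u0^2 + J^2*u0))
     = 1 + m + (q*u1^2 + (1-q)*u0^2) + J^2*m"
    unfolding m_def by (simp add: algebra_simps)
  have Rr: "(1 + q*u1 + (1-q)*u0)^2 + J^2*(1 + q*u1 + (1-q)*u0) = 1 + 2*m + m^2 + J^2 + J^2*m"
    unfolding m_def by (simp add: power2_eq_square algebra_simps)
  show ?thesis unfolding L Rr id using e m0 by simp
qed

abbreviation U :: "state \<Rightarrow> real" where "U \<equiv> Vf 1"

definition Qf :: "state \<Rightarrow> real" where
  "Qf t = (U t)^2 + (1 + Phi 1)^2 * U t"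

lemma Q_super: "Good s \<Longrightarrow> U s + M Qf s \<le> Qf s"
proof (cases "s \<in> E")
  case True then show ?thesis by (simp add: M_def E_Vf Qf_def)
next
  case False
  assume gs: "Good s"
  have bc: "U s = 1 + q s * U (s1 s) + (1 - q s) * U (s0 s)" "Good (s1 s)" "Good (s0 s)"
      "U (s0 s) \<le> U (s1 s)" "U (s1 s) \<le> U (s0 s) + (1 + Phi 1)"
    using bellman_closure[OF gs False, of 1] wt1 by auto
  have "0 \<le> U (s0 s)" using Vf_nonneg bc(3) by simp
  from ineq[OF conjunct1[OF q01[of s]] conjunct2[OF q01[of s]] this bc(4) bc(5)]
  show ?thesis using False unfolding M_def Qf_def bc(1) by simp
qed

lemma psum: "Good s \<Longrightarrow> (\<Sum>k<n. (M ^^ k) U s) \<le> Qf s"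
proof (induction n arbitrary: s)
  case 0
  have "0 \<le> U s" using Vf_nonneg 0 by simp
  then show ?case by (simp add: Qf_def)
next
  case (Suc n)
  have "(\<Sum>k<Suc n. (M ^^ k) U s) = U s + (\<Sum>k<n. M ((M ^^ k) U) s)"
    unfolding sum.lessThan_Suc_shift by simp
  also have "\<dots> = U s + M (\<lambda>t. \<Sum>k<n. (M ^^ k) U t) s" by (simp add: M_sum)
  also have "\<dots> \<le> U s + M Qf s" using M_mono[OF Suc.prems] Suc.IH by simp
  also have "\<dots> \<le> Qf s" using Q_super[OF Suc.prems] .
  finally show ?case .
qed

lemma tail0: "Good s \<Longrightarrow> (\<lambda>k. (M ^^ k) U s) \<longlonglongrightarrow> 0"
proof -
  assume gs: "Good s"
  have "summable (\<lambda>k. (M ^^ k) U s)"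
  proof (rule summableI_nonneg_bounded[where x="Qf s"])
    show "0 \<le> (M ^^ n) U s" for n using Mpow_nonneg[OF gs] Vf_nonneg by simp
    show "(\<Sum>k<n. (M ^^ k) U s) \<le> Qf s" for n using psum[OF gs] .
  qed
  then show ?thesis by (rule summable_LIMSEQ_zero)
qed

lemma conv:
  assumes ww: "\<And>s. Good s \<Longrightarrow> s \<notin> E \<Longrightarrow> w s = wt ws s" and ws: "0 \<le> ws" "ws \<le> 1"
    and gs: "Good s"
  shows "(SUP n. ennreal (fv w n s)) = ennreal (Vf ws s)"
proof -
  define D where "D n = (M ^^ Suc n) (Vf ws) s" for n
  have fD: "fv w n s = Vf ws s - D n" for n using decomp[OF ww ws(1) gs, of n] unfolding D_def by simp
  have D0: "0 \<le> D n" for n unfolding D_def using gs by (intro Mpow_nonneg Vf_nonneg ws(1))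
  have DU: "D n \<le> (M ^^ Suc n) U s" for n unfolding D_def
    using gs by (intro Mpow_mono Vf_mono ws) auto
  have "(\<lambda>n. (M ^^ Suc n) U s) \<longlonglongrightarrow> 0" using tail0[OF gs] by (rule LIMSEQ_Suc)
  then have "D \<longlonglongrightarrow> 0"
  proof (rule tendsto_sandwich[rotated 2, OF tendsto_const])
    show "\<forall>\<^sub>F n in sequentially. 0 \<le> D n" using D0 by simp
    show "\<forall>\<^sub>F n in sequentially. D n \<le> (M ^^ Suc n) U s" using DU by (simp del: funpow.simps)
  qed
  then have "(\<lambda>n. fv w n s) \<longlonglongrightarrow> Vf ws s - 0" unfolding fD by (intro tendsto_intros)
  then have lim: "(\<lambda>n. ennreal (fv w n s)) \<longlonglongrightarrow> ennreal (Vf ws s)" by simp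
  have le: "fv w n s \<le> Vf ws s" for n using fD D0 by simp
  show ?thesis
  proof (rule antisym)
    show "(SUP n. ennreal (fv w n s)) \<le> ennreal (Vf ws s)"
      by (rule SUP_least) (rule ennreal_leI, rule le)
    show "ennreal (Vf ws s) \<le> (SUP n. ennreal (fv w n s))"
      by (rule LIMSEQ_le_const2[OF lim]) (intro exI allI impI SUP_upper UNIV_I)
  qed
qed

end
theorem theorem3p4:
  fixes r :: nat and pc :: real and p :: "nat \<Rightarrow> real" and a :: "nat list"
  assumes "r \<ge> 1"
    and "0 \<le> pc" and "pc \<le> 1"
    and "\<And>i. 1 \<le> i \<Longrightarrow> i \<le> r \<Longrightarrow> 0 \<le> p i \<and> p i \<le> 1"
    and "pc < 1"
    and "pc * real r * Max (p ` {1..r}) < 1"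
    and "set a \<subseteq> {1..r}"
  shows "ExpO r pc p (S 1 a) = ennreal ((\<Sum>i=1..r. p i) / (1 - pc * (\<Sum>i=1..r. p i))) \<and>
         ExpN r pc p (S 1 a) = ennreal ((real r + (\<Sum>i=1..r. p i)) / (1 - pc * (\<Sum>i=1..r. p i)))"
proof -
  interpret G r pc p a
    using assms by unfold_locales auto
  have gs: "Good (S 1 a)" unfolding Good_def
    using assms(1,7) by (intro disjI2 exI[of _ 1] exI[of _ a]) simp
  have Ea: "exitset r (block_of (S 1 a)) = E" by (simp add: E_def)
  have V1: "Vf ws (S 1 a) = Phi ws" for ws using R1 tsum_a by simp
  define wO where "wO s = (if is_output s then 1 else (0::real))" for s
  have pO: "(\<integral>\<^sup>+xs. ennreal (real (length (filter is_output (takeWhile (\<lambda>x. x \<notin> E) xs))))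
      \<partial>measure_pmf (path (kern r pc p) n (S 1 a))) = ennreal (fv wO n (S 1 a))" for n
    by (rule path_int) (auto simp: wO_def)
  have pN: "(\<integral>\<^sup>+xs. ennreal (real (length (takeWhile (\<lambda>x. x \<notin> E) xs)))
      \<partial>measure_pmf (path (kern r pc p) n (S 1 a))) = ennreal (fv (\<lambda>_. 1) n (S 1 a))" for n
    by (rule path_int) auto
  have wwO: "wO s = wt 0 s" if "Good s" "s \<notin> E" for s
    using goodSC[OF that] by (auto simp: wO_def wt_def)
  have wwN: "(\<lambda>_. 1::real) s = wt 1 s" for s by (simp add: wt1)
  have cO: "(SUP n. ennreal (fv wO n (S 1 a))) = ennreal (Vf 0 (S 1 a))"
    by (rule conv[OF wwO _ _ gs]) auto
  have cN: "(SUP n. ennreal (fv (\<lambda>_. 1) n (S 1 a))) = ennreal (Vf 1 (S 1 a))"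
    by (rule conv[OF wwN _ _ gs]) auto
  have O: "ExpO r pc p (S 1 a) = ennreal (Phi 0)"
    unfolding ExpO_def Ea pO cO V1 ..
  have N: "ExpN r pc p (S 1 a) = ennreal (Phi 1)"
    unfolding ExpN_def Ea pN cN V1 ..
  show ?thesis unfolding O N Phi_def PP_def by simp
qed

end
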